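(* For every $\gamma\in[0,1]$, the Equal Filling Till Threshold (EFTT) algorithm with threshold $\gamma$ (described in the context) is $\left(1 - \frac{e^{\gamma-1}}{\gamma+1}\right)$-USW, i.e., on every instance the fractional matching $X$ it outputs satisfies $\mathrm{usw}(X)\ge \left(1 - \frac{e^{\gamma-1}}{\gamma+1}\right)\mathrm{usw}(X^* )$ for every fractional matching $X^*$ of the instance.
   Context: Online class matching (divisible setting): an instance is a bipartite graph $G=(N,M,E)$ with known agents $N$, items $M$, $E\subseteq M\times N$ ($a$ likes $o$ iff $(o,a)\in E$); agents are partitioned into $k$ known classes $N_1,\dots,N_k$. Items arrive one at a time in adversarial order; upon arrival of $o$ its set of liking agents is revealed and fractions of $o$ must be irrevocably assigned to agents liking it. A fractional matching is $X=(x_{o,a})\in[0,1]^{M\times N}$ supported on $E$ with $\sum_a x_{o,a}\le1$ for each item and $\sum_o x_{o,a}\le 1$ for each agent; $\deg_X(v)$ denotes the sum of $x$ over edges incident to $v$; an agent is saturated if its degree is $1$. $V_i(X)=\sum_{a\in N_i}\sum_o x_{o,a}$ and $\mathrm{usw}(X)=\sum_i V_i(X)$. EFTT with threshold $\gamma$: the matching is increased continuously (water-filling). Upon arrival of item $o$: Phase I: let $Z_\gamma$ be the set of classes containing at least one agent that likes $o$ and has current degree less than $\gamma$. While $Z_\gamma\neq\emptyset$ and $o$ is not fully assigned, continuously assign mass of $o$, splitting it equally among the classes in $Z_\gamma$; within each class $i\in Z_\gamma$, the mass goes to the agent(s) of class $i$ liking $o$ with minimum current degree; a class is removed from $Z_\gamma$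 once it no longer has an agent liking $o$ with degree less than $\gamma$. Phase II: once $Z_\gamma=\emptyset$, continuously assign the remaining mass of $o$ to the unsaturated agent(s) liking $o$ with smallest current degree, regardless of class, until $o$ is fully assigned or all agents liking $o$ are saturated. *)

theory Defs
  imports Complex_Main
begin

text \<open>Instance: agents of type 'a (set N), items of type 'o (set M), edges E \<subseteq> M \<times> N,
  (it,a) \<in> E iff agent a likes item it. Classes: a labelling cls :: 'a \<Rightarrow> 'c; the class
  N_i is {a \<in> N. cls a = i}.\<close>

definition frac_matching ::
  "('o \<times> 'a) set \<Rightarrow> 'o set \<Rightarrow> 'a set \<Rightarrow> ('o \<Rightarrow> 'a \<Rightarrow> real) \<Rightarrow> bool" where
  "frac_matching E M N X \<longleftrightarrow>
     (\<forall>it a. 0 \<le> X it a \<and> X it a \<le> 1) \<and>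
     (\<forall>it a. (it, a) \<notin> E \<longrightarrow> X it a = 0) \<and>
     (\<forall>it\<in>M. (\<Sum>a\<in>N. X it a) \<le> 1) \<and>
     (\<forall>a\<in>N. (\<Sum>it\<in>M. X it a) \<le> 1)"

definition usw :: "'o set \<Rightarrow> 'a set \<Rightarrow> ('o \<Rightarrow> 'a \<Rightarrow> real) \<Rightarrow> real" where
  "usw M N X = (\<Sum>it\<in>M. \<Sum>a\<in>N. X it a)"

definition likers :: "('o \<times> 'a) set \<Rightarrow> 'a set \<Rightarrow> 'o \<Rightarrow> 'a set" where
  "likers E N it = {a \<in> N. (it, a) \<in> E}"

text \<open>One arrival of EFTT with threshold g. d = current agent degrees, it = arriving item,
  y = the amounts of it given to each agent. The continuous water-filling is described by
  its outcome:
  Phase I: need i is the mass needed to lift every liker of class i to degree g; classes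
  in Z_g (need i > 0) receive equal rates until they leave, so class i gets
  p i = min c (need i) for a common level c, with total min 1 (sum of needs);
  within class i the mass p i water-fills the likers up to a level l i \<le> g.
  Phase II: the remaining mass 1 - (total of phase I) water-fills all likers (any class)
  up to a common level lv \<le> 1, until it is exhausted or all likers are saturated.\<close>

definition eftt_step ::
  "('o \<times> 'a) set \<Rightarrow> 'a set \<Rightarrow> ('a \<Rightarrow> 'c) \<Rightarrow> real \<Rightarrow> ('a \<Rightarrow> real) \<Rightarrow> 'o \<Rightarrow> ('a \<Rightarrow> real) \<Rightarrow> bool"
  where
  "eftt_step E N cls g d it y \<longleftrightarrow>
    (let L = likers E N it;
         C = cls ` L;
         need = (\<lambda>i. \<Sum>a\<in>{a\<in>L. cls a = i}. max 0 (g - d a))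
     in (\<exists>c l lv.
          0 \<le> c \<and>
          (\<Sum>i\<in>C. min c (need i)) = min 1 (\<Sum>i\<in>C. need i) \<and>
          (\<forall>i\<in>C. l i \<le> g \<and>
              (\<Sum>a\<in>{a\<in>L. cls a = i}. max 0 (l i - d a)) = min c (need i)) \<and>
          (let d1 = (\<lambda>a. max (d a) (l (cls a)));
               r = 1 - (\<Sum>i\<in>C. min c (need i))
           in lv \<le> 1 \<and>
              (\<Sum>a\<in>L. max 0 (lv - d1 a)) = min r (\<Sum>a\<in>L. max 0 (1 - d1 a)) \<and>
              (\<forall>a. y a = (if a \<in> L then max (d1 a) lv - d a else 0)))))"

definition eftt_output ::
  "('o \<times> 'a) set \<Rightarrow> 'a set \<Rightarrow> ('a \<Rightarrow> 'c) \<Rightarrow> real \<Rightarrow> 'o list \<Rightarrow> ('o \<Rightarrow> 'a \<Rightarrow> real) \<Rightarrow> bool"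
  where
  "eftt_output E N cls g ord X \<longleftrightarrow>
     (\<forall>it a. it \<notin> set ord \<longrightarrow> X it a = 0) \<and>
     (\<forall>j < length ord.
        eftt_step E N cls g (\<lambda>a. \<Sum>i<j. X (ord ! i) a) (ord ! j) (X (ord ! j)))"

end

theory Submission
  imports Defs
begin

definition thF :: "real \<Rightarrow> real" where
  "thF g = exp (g - 1) / (g + 1)"

definition FF :: "real \<Rightarrow> real \<Rightarrow> real" where
  "FF g x = (if x \<le> g then thF g * x else thF g * g + thF g * (1 + g) * (exp (x - g) - 1))"

definition fp :: "real \<Rightarrow> real \<Rightarrow> real" where
  "fp g w = (if w \<le> g then thF g else thF g * (1 + g) * exp (w - g))"

lemma thF_pos: "0 \<le> g \<Longrightarrow> 0 < thF g"
  unfolding thF_def by simp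

lemma exp_aux1: "0 \<le> (t::real) \<Longrightarrow> exp t - 1 \<le> t * exp t"
proof -
  assume "0 \<le> t"
  have "1 - t \<le> exp (-t)" using exp_ge_add_one_self[of "-t"] by simp
  hence "(1 - t) * exp t \<le> exp (-t) * exp t" by (simp add: mult_right_mono)
  also have "\<dots> = 1" by (simp add: exp_add[symmetric])
  finally show ?thesis by (simp add: algebra_simps)
qed

lemma exp_aux2: "(u::real) \<le> v \<Longrightarrow> exp v - exp u \<le> exp v * (v - u)"
proof -
  assume "u \<le> v"
  have "1 + (u - v) \<le> exp (u - v)" by (rule exp_ge_add_one_self)
  hence "exp v * (1 + (u - v)) \<le> exp v * exp (u - v)" by (simp add: mult_left_mono)
  also have "exp v * exp (u - v) = exp u" by (simp add: exp_add[symmetric])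
  finally show ?thesis by (simp add: algebra_simps)
qed

lemma fp_ge: "0 \<le> g \<Longrightarrow> thF g \<le> fp g w"
proof -
  assume g: "0 \<le> g"
  have "1 \<le> (1 + g) * exp (w - g)" if "w > g"
    using that g by (metis add_increasing2 less_eq_real_def mult_mono one_le_exp_iff
        zero_le_one diff_gt_0_iff_gt mult_1 le_add_same_cancel1)
  thus ?thesis using thF_pos[OF g] unfolding fp_def
    by (auto simp: mult.assoc intro: mult_le_cancel_left1[THEN iffD2] )
qed

lemma thF_mul: "0 \<le> g \<Longrightarrow> thF g * (1 + g) = exp (g - 1)"
  unfolding thF_def by (simp add: field_simps)

lemma thF_mul2: "0 \<le> g \<Longrightarrow> exp (g - 1) = thF g + thF g * g"
  using thF_mul[of g] by (simp add: distrib_left)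

lemma thF_mul_exp: "0 \<le> g \<Longrightarrow> thF g * (1 + g) * exp (w - g) = exp (w - 1)"
  by (simp add: thF_mul exp_add[symmetric])

lemma thF_le1: "0 \<le> g \<Longrightarrow> g \<le> 1 \<Longrightarrow> thF g \<le> 1"
proof -
  assume g: "0 \<le> g" "g \<le> 1"
  have "exp (g - 1) \<le> 1" using g by simp
  also have "1 \<le> g + 1" using g by simp
  finally show ?thesis unfolding thF_def using g by (simp add: divide_le_eq)
qed

lemma FF_above: "0 \<le> g \<Longrightarrow> \<not> x \<le> g \<Longrightarrow> FF g x = thF g * g + exp (x - 1) - exp (g - 1)"
proof -
  assume g: "0 \<le> g" and x: "\<not> x \<le> g"
  have "thF g * (1+g) * (exp (x-g) - 1) = thF g*(1+g)*exp(x-g) - thF g * (1+g)"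
    by (simp add: right_diff_distrib)
  thus ?thesis using x g unfolding FF_def by (simp add: thF_mul_exp thF_mul exp_add[symmetric])
qed

lemma FF_step:
  assumes g: "0 \<le> g" and uv: "u \<le> v" and vw: "v \<le> w"
  shows "FF g v - FF g u \<le> fp g w * (v - u)"
proof -
  have th: "0 < thF g" using thF_pos[OF g] .
  have fpw: "thF g \<le> fp g w" using fp_ge[OF g] .
  show ?thesis
  proof (cases "v \<le> g")
    case True
    hence "FF g v - FF g u = thF g * (v - u)" using uv unfolding FF_def by (simp add: algebra_simps)
    also have "\<dots> \<le> fp g w * (v - u)" using fpw uv by (simp add: mult_right_mono)
    finally show ?thesis .
  next
    case False
    hence w: "\<not> w \<le> g" using vw by simp
    have fpw2: "fp g w = exp (w - 1)" using w g unfolding fp_def by (simp add: thF_mul_exp)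
    have ev: "exp (v - 1) \<le> exp (w - 1)" using vw by simp
    have fv1: "thF g \<le> exp (v - 1)" using fp_ge[OF g, of v] False g unfolding fp_def by (simp add: thF_mul_exp)
    have FFv: "FF g v = thF g * g + exp (v - 1) - exp (g - 1)"
      using False g by (simp add: FF_above)
    show ?thesis
    proof (cases "u \<le> g")
      case True
      have FFu: "FF g u = thF g * u" using True unfolding FF_def by simp
      have a1: "exp (v - g) - 1 \<le> (v - g) * exp (v - g)" using exp_aux1[of "v - g"] False by simp
      have a2: "exp (v - 1) - exp (g - 1) \<le> (v - g) * exp (v - 1)"
      proof -
        have "exp (v - 1) - exp (g - 1) = exp (g - 1) * (exp (v - g) - 1)"
          by (simp add: algebra_simps exp_add[symmetric])
        also have "\<dots> \<le> exp (g - 1) * ((v - g) * exp (v - g))" using a1 by (simp add: mult_left_mono)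
        also have "\<dots> = (v - g) * exp (v - 1)" by (simp add: algebra_simps exp_add[symmetric])
        finally show ?thesis .
      qed
      have a3: "thF g * (g - u) \<le> exp (v - 1) * (g - u)" using fv1 True by (simp add: mult_right_mono)
      have "FF g v - FF g u = thF g * (g - u) + (exp (v - 1) - exp (g - 1))"
        using FFv FFu by (simp add: algebra_simps)
      also have "\<dots> \<le> exp (v - 1) * (v - u)" using a2 a3 by (simp add: algebra_simps)
      also have "\<dots> \<le> exp (w - 1) * (v - u)" using ev uv by (simp add: mult_right_mono)
      finally show ?thesis using fpw2 by simp
    next
      case False
      have FFu: "FF g u = thF g * g + exp (u - 1) - exp (g - 1)"
        using False g by (simp add: FF_above)
      have "FF g v - FF g u = exp (v - 1) - exp (u - 1)" using FFv FFu by simp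
      also have "\<dots> \<le> exp (v - 1) * (v - u)" using exp_aux2[of "u - 1" "v - 1"] uv by simp
      also have "\<dots> \<le> exp (w - 1) * (v - u)" using ev uv by (simp add: mult_right_mono)
      finally show ?thesis using fpw2 by simp
    qed
  qed
qed

lemma FF_mono:
  assumes g: "0 \<le> g" and xy: "x \<le> y" shows "FF g x \<le> FF g y"
proof -
  have "FF g y - FF g x \<le> fp g y * (y - x)" using FF_step[OF g xy] by simp
  have "0 \<le> FF g y - FF g x"
  proof (cases "y \<le> g")
    case True thus ?thesis using xy thF_pos[OF g] unfolding FF_def by (simp add: algebra_simps)
  next
    case False
    have FFy: "FF g y = thF g * g + exp (y - 1) - exp (g - 1)"
      using False g by (simp add: FF_above)
    show ?thesis
    proof (cases "x \<le> g")
      case True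
      have "thF g * x \<le> thF g * g" using True thF_pos[OF g] by simp
      moreover have "exp (g - 1) \<le> exp (y - 1)" using False by simp
      moreover have "FF g x = thF g * x" using True unfolding FF_def by simp
      ultimately show ?thesis using FFy by linarith
    next
      case False
      have FFx: "FF g x = thF g * g + exp (x - 1) - exp (g - 1)"
        using False g by (simp add: FF_above)
      show ?thesis using FFx FFy xy by simp
    qed
  qed
  thus ?thesis by simp
qed

lemma FF_zero: "0 \<le> g \<Longrightarrow> FF g 0 = 0"
  unfolding FF_def by simp

lemma FF_nonneg: "0 \<le> g \<Longrightarrow> 0 \<le> x \<Longrightarrow> 0 \<le> FF g x"
  using FF_mono[of g 0 x] FF_zero[of g] by simp

lemma FF_one: "0 \<le> g \<Longrightarrow> g \<le> 1 \<Longrightarrow> FF g 1 = 1 - thF g"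
proof -
  assume g: "0 \<le> g" "g \<le> 1"
  show ?thesis
  proof (cases "g = 1")
    case True thus ?thesis unfolding FF_def thF_def by simp
  next
    case False
    hence "\<not> 1 \<le> g" using g by simp
    hence "FF g 1 = thF g * g + exp (1 - 1) - exp (g - 1)" using g by (intro FF_above) auto
    thus ?thesis using thF_mul2[OF g(1)] by simp
  qed
qed

lemma fp_le1: "0 \<le> g \<Longrightarrow> g \<le> 1 \<Longrightarrow> w \<le> 1 \<Longrightarrow> fp g w \<le> 1"
  unfolding fp_def using thF_le1 by (simp add: thF_mul_exp)

lemma key_bound:
  assumes g: "0 \<le> g" "g \<le> 1" and Y: "0 \<le> Y"
  shows "1 - thF g \<le> FF g Y + (1 - fp g (max g Y))"
proof (cases "Y \<le> g")
  case True
  thus ?thesis using FF_nonneg[OF g(1) Y] unfolding fp_def by simp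
next
  case False
  have FFY: "FF g Y = thF g * g + exp (Y - 1) - exp (g - 1)"
    using False g by (simp add: FF_above)
  have "fp g (max g Y) = exp (Y - 1)" using False g unfolding fp_def by (simp add: thF_mul_exp)
  moreover have "thF g * g - exp (g - 1) = - thF g" using thF_mul2[OF g(1)] by simp
  ultimately show ?thesis using FFY by simp
qed

lemma step_props:
  assumes st: "eftt_step E N cls g d it y" and fin: "finite N"
    and g: "0 \<le> g" "g \<le> 1" and dB: "\<forall>a. 0 \<le> d a \<and> d a \<le> 1"
  shows "\<forall>a. 0 \<le> y a"
    and "\<forall>a. a \<notin> likers E N it \<longrightarrow> y a = 0"
    and "\<forall>a\<in>likers E N it. d a + y a \<le> 1"
    and "\<forall>a\<in>likers E N it. 1 \<le> d a + y a \<or>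
           ((\<Sum>b\<in>likers E N it. y b) = 1 \<and>
            (\<forall>b\<in>likers E N it. 0 < y b \<longrightarrow> d b + y b \<le> max g (d a + y a)))"
proof -
  define L where "L = likers E N it"
  define C where "C = cls ` L"
  define need where "need = (\<lambda>i. \<Sum>a\<in>{a\<in>L. cls a = i}. max 0 (g - d a))"
  from st obtain c l lv where c0: "0 \<le> c"
    and hP: "(\<Sum>i\<in>C. min c (need i)) = min 1 (\<Sum>i\<in>C. need i)"
    and hl: "\<forall>i\<in>C. l i \<le> g \<and> (\<Sum>a\<in>{a\<in>L. cls a = i}. max 0 (l i - d a)) = min c (need i)"
    and hlv: "lv \<le> 1"
    and hT: "(\<Sum>a\<in>L. max 0 (lv - max (d a) (l (cls a)))) =
       min (1 - (\<Sum>i\<in>C. min c (need i))) (\<Sum>a\<in>L. max 0 (1 - max (d a) (l (cls a))))"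
    and hy: "\<forall>a. y a = (if a \<in> L then max (max (d a) (l (cls a))) lv - d a else 0)"
    unfolding eftt_step_def Let_def L_def C_def need_def by blast
  define d1 where "d1 = (\<lambda>a. max (d a) (l (cls a)))"
  define P where "P = (\<Sum>i\<in>C. min c (need i))"
  have finL: "finite L" using fin unfolding L_def likers_def by simp
  have finC: "finite C" using finL unfolding C_def by simp
  have lg: "\<And>a. a \<in> L \<Longrightarrow> l (cls a) \<le> g" using hl unfolding C_def by auto
  show "\<forall>a. 0 \<le> y a" using hy by auto
  show "\<forall>a. a \<notin> likers E N it \<longrightarrow> y a = 0" using hy unfolding L_def by auto
  show "\<forall>a\<in>likers E N it. d a + y a \<le> 1"
    using hy lg dB g hlv unfolding L_def[symmetric] by (auto intro: order_trans)
  have yL: "\<And>a. a \<in> L \<Longrightarrow> y a = max 0 (l (cls a) - d a) + max 0 (lv - d1 a)"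
    using hy unfolding d1_def by (auto simp: max_def)
  have s1: "(\<Sum>a\<in>L. max 0 (l (cls a) - d a)) = P"
  proof -
    have "(\<Sum>a\<in>L. max 0 (l (cls a) - d a)) =
          (\<Sum>i\<in>C. \<Sum>a\<in>{a\<in>L. cls a = i}. max 0 (l (cls a) - d a))"
      using sum.group[OF finL finC, of cls "\<lambda>a. max 0 (l (cls a) - d a)"] unfolding C_def by simp
    also have "\<dots> = (\<Sum>i\<in>C. \<Sum>a\<in>{a\<in>L. cls a = i}. max 0 (l i - d a))"
      by (intro sum.cong refl) auto
    also have "\<dots> = P" unfolding P_def using hl by (intro sum.cong refl) auto
    finally show ?thesis .
  qed
  have sumy: "(\<Sum>a\<in>L. y a) = P + (\<Sum>a\<in>L. max 0 (lv - d1 a))"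
    using s1 yL by (simp add: sum.distrib)
  have hT': "(\<Sum>a\<in>L. max 0 (lv - d1 a)) = min (1 - P) (\<Sum>a\<in>L. max 0 (1 - d1 a))"
    using hT unfolding d1_def P_def .
  show "\<forall>a\<in>likers E N it. 1 \<le> d a + y a \<or>
           ((\<Sum>b\<in>likers E N it. y b) = 1 \<and>
            (\<forall>b\<in>likers E N it. 0 < y b \<longrightarrow> d b + y b \<le> max g (d a + y a)))"
    unfolding L_def[symmetric]
  proof
    fix a assume aL: "a \<in> L"
    have Ya: "d a + y a = max (d1 a) lv" using hy aL unfolding d1_def by simp
    show "1 \<le> d a + y a \<or> ((\<Sum>b\<in>L. y b) = 1 \<and> (\<forall>b\<in>L. 0 < y b \<longrightarrow> d b + y b \<le> max g (d a + y a)))"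
    proof (cases "1 - P \<le> (\<Sum>a\<in>L. max 0 (1 - d1 a))")
      case True
      hence "(\<Sum>b\<in>L. y b) = 1" using sumy hT' by simp
      moreover have "\<forall>b\<in>L. 0 < y b \<longrightarrow> d b + y b \<le> max g (d a + y a)"
      proof (intro ballI impI)
        fix b assume bL: "b \<in> L" and yb: "0 < y b"
        have Yb: "d b + y b = max (d1 b) lv" using hy bL unfolding d1_def by simp
        show "d b + y b \<le> max g (d a + y a)"
        proof (cases "d1 b \<le> lv")
          case True thus ?thesis using Yb Ya by auto
        next
          case False
          hence "d b + y b = d1 b" using Yb by simp
          hence "d1 b = l (cls b)" using yb unfolding d1_def by (auto simp: max_def split: if_splits)
          thus ?thesis using lg[OF bL] \<open>d b + y b = d1 b\<close> by simp
        qed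
      qed
      ultimately show ?thesis by blast
    next
      case False
      hence eqT: "(\<Sum>b\<in>L. max 0 (lv - d1 b)) = (\<Sum>b\<in>L. max 0 (1 - d1 b))" using hT' by simp
      have "max 0 (lv - d1 a) = max 0 (1 - d1 a)"
      proof (rule ccontr)
        assume ne: "max 0 (lv - d1 a) \<noteq> max 0 (1 - d1 a)"
        have le: "\<forall>b\<in>L. max 0 (lv - d1 b) \<le> max 0 (1 - d1 b)" using hlv by (auto simp: max_def)
        have "\<exists>b\<in>L. max 0 (lv - d1 b) < max 0 (1 - d1 b)" using le ne aL by force
        hence "(\<Sum>b\<in>L. max 0 (lv - d1 b)) < (\<Sum>b\<in>L. max 0 (1 - d1 b))"
          using sum_strict_mono_ex1[OF finL le] by blast
        thus False using eqT by simp
      qed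
      hence "1 \<le> max (d1 a) lv" by (auto simp: max_def split: if_splits)
      thus ?thesis using Ya by simp
    qed
  qed
qed

theorem lemma1:
  fixes E :: "('o \<times> 'a) set" and M :: "'o set" and N :: "'a set"
    and cls :: "'a \<Rightarrow> 'c" and g :: real and ord :: "'o list"
    and X Xs :: "'o \<Rightarrow> 'a \<Rightarrow> real"
  assumes "finite M" and "finite N" and "E \<subseteq> M \<times> N"
    and "0 \<le> g" and "g \<le> 1"
    and "distinct ord" and "set ord = M"
    and "eftt_output E N cls g ord X"
    and "frac_matching E M N Xs"
  shows "usw M N X \<ge> (1 - exp (g - 1) / (g + 1)) * usw M N Xs"
proof -
  note finM = assms(1) and finN = assms(2) and EMN = assms(3) and g = assms(4) assms(5)
  define n where "n = length ord"
  define D where "D = (\<lambda>j a. \<Sum>i<j. X (ord ! i) a)"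
  have X0: "\<forall>it a. it \<notin> set ord \<longrightarrow> X it a = 0"
    and stp: "\<And>j. j < n \<Longrightarrow> eftt_step E N cls g (D j) (ord ! j) (X (ord ! j))"
    using assms(8) unfolding eftt_output_def D_def n_def by auto
  have Dsuc: "\<And>j a. D (Suc j) a = D j a + X (ord ! j) a" unfolding D_def by simp
  have D0: "\<And>a. D 0 a = 0" unfolding D_def by simp
  have inv: "\<forall>a. 0 \<le> D j a \<and> D j a \<le> 1" if "j \<le> n" for j
    using that
  proof (induction j)
    case 0 thus ?case using D0 by simp
  next
    case (Suc j)
    hence jn: "j < n" and IH: "\<forall>a. 0 \<le> D j a \<and> D j a \<le> 1" by auto
    note sp = step_props[OF stp[OF jn] finN g IH]
    show ?case
    proof
      fix a
      show "0 \<le> D (Suc j) a \<and> D (Suc j) a \<le> 1"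
      proof (cases "a \<in> likers E N (ord ! j)")
        case True thus ?thesis using sp(1) sp(3) IH Dsuc by (metis add_nonneg_nonneg)
      next
        case False thus ?thesis using sp(2) IH Dsuc by simp
      qed
    qed
  qed
  have Xnn: "\<And>it a. 0 \<le> X it a"
  proof -
    fix it a
    show "0 \<le> X it a"
    proof (cases "it \<in> set ord")
      case True
      then obtain j where jn: "j < n" and it: "it = ord ! j" unfolding n_def by (auto simp: in_set_conv_nth)
      show ?thesis using step_props(1)[OF stp[OF jn] finN g inv[of j]] jn it by simp
    next
      case False thus ?thesis using X0 by simp
    qed
  qed
  have Dmono: "\<And>j k a. j \<le> k \<Longrightarrow> D j a \<le> D k a"
    unfolding D_def by (rule sum_mono2) (auto simp: Xnn)
  have bij: "bij_betw ((!) ord) {..<n} M" using bij_betw_nth[OF assms(6)] assms(7) unfolding n_def by simp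
  have reidx: "\<And>h :: 'o \<Rightarrow> real. (\<Sum>it\<in>M. h it) = (\<Sum>j<n. h (ord ! j))"
    using sum.reindex_bij_betw[OF bij] by metis
  have ordM: "\<And>j. j < n \<Longrightarrow> ord ! j \<in> M" using assms(7) unfolding n_def by auto
  define rho where "rho = 1 - thF g"
  define \<alpha> where "\<alpha> = (\<lambda>a. FF g (D n a))"
  define \<beta> where "\<beta> = (\<lambda>j. \<Sum>a\<in>N. X (ord ! j) a - (FF g (D (Suc j) a) - FF g (D j a)))"
  have dual_eq: "(\<Sum>a\<in>N. \<alpha> a) + (\<Sum>j<n. \<beta> j) = usw M N X"
  proof -
    have u: "usw M N X = (\<Sum>j<n. \<Sum>a\<in>N. X (ord ! j) a)" unfolding usw_def by (rule reidx)
    have "(\<Sum>j<n. \<beta> j) = (\<Sum>j<n. \<Sum>a\<in>N. X (ord ! j) a) -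
        (\<Sum>j<n. \<Sum>a\<in>N. FF g (D (Suc j) a) - FF g (D j a))"
      unfolding \<beta>_def by (simp add: sum_subtractf)
    also have "(\<Sum>j<n. \<Sum>a\<in>N. FF g (D (Suc j) a) - FF g (D j a)) =
        (\<Sum>a\<in>N. \<Sum>j<n. FF g (D (Suc j) a) - FF g (D j a))" by (rule sum.swap)
    also have "\<dots> = (\<Sum>a\<in>N. \<alpha> a)"
    proof -
      have "\<And>a. (\<Sum>j<n. FF g (D (Suc j) a) - FF g (D j a)) = FF g (D n a)"
      proof -
        fix a show "(\<Sum>j<n. FF g (D (Suc j) a) - FF g (D j a)) = FF g (D n a)"
          using sum_lessThan_telescope[of "\<lambda>j. FF g (D j a)" n] D0[of a] FF_zero[OF g(1)] by simp
      qed
      thus ?thesis unfolding \<alpha>_def by simp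
    qed
    finally show ?thesis using u by simp
  qed
  have \<alpha>nn: "\<And>a. 0 \<le> \<alpha> a" unfolding \<alpha>_def using FF_nonneg[OF g(1)] inv[of n] by simp
  have \<beta>nn: "\<And>j. j < n \<Longrightarrow> 0 \<le> \<beta> j"
  proof -
    fix j assume jn: "j < n"
    show "0 \<le> \<beta> j" unfolding \<beta>_def
    proof (rule sum_nonneg)
      fix a assume "a \<in> N"
      have st: "FF g (D (Suc j) a) - FF g (D j a) \<le> fp g (D (Suc j) a) * (D (Suc j) a - D j a)"
        using FF_step[OF g(1), of "D j a" "D (Suc j) a" "D (Suc j) a"] Dmono[of j "Suc j" a] by simp
      have "fp g (D (Suc j) a) \<le> 1" using fp_le1[OF g] inv[of "Suc j"] jn by simp
      hence "fp g (D (Suc j) a) * X (ord ! j) a \<le> X (ord ! j) a"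
        using Xnn[of "ord ! j" a] mult_right_mono[of "fp g (D (Suc j) a)" 1 "X (ord ! j) a"] by simp
      thus "0 \<le> X (ord ! j) a - (FF g (D (Suc j) a) - FF g (D j a))" using st Dsuc[of j a] by simp
    qed
  qed
  have edge: "\<And>j a. j < n \<Longrightarrow> (ord ! j, a) \<in> E \<Longrightarrow> rho \<le> \<alpha> a + \<beta> j"
  proof -
    fix j a assume jn: "j < n" and e: "(ord ! j, a) \<in> E"
    have aN: "a \<in> N" using e EMN by auto
    have aL: "a \<in> likers E N (ord ! j)" using aN e unfolding likers_def by simp
    note sp = step_props[OF stp[OF jn] finN g inv[of j, OF less_imp_le[OF jn]]]
    define Y where "Y = D (Suc j) a"
    have Yeq: "D j a + X (ord ! j) a = Y" unfolding Y_def using Dsuc by simp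
    have Y0: "0 \<le> Y" unfolding Y_def using inv[of "Suc j"] jn by simp
    have \<alpha>Y: "FF g Y \<le> \<alpha> a" unfolding \<alpha>_def Y_def using FF_mono[OF g(1) Dmono[of "Suc j" n a]] jn by simp
    from sp(4) aL have cs: "1 \<le> Y \<or> ((\<Sum>b\<in>likers E N (ord ! j). X (ord ! j) b) = 1 \<and>
        (\<forall>b\<in>likers E N (ord ! j). 0 < X (ord ! j) b \<longrightarrow> D j b + X (ord ! j) b \<le> max g Y))"
      using Yeq by auto
    show "rho \<le> \<alpha> a + \<beta> j"
    proof (cases "1 \<le> Y")
      case True
      have "rho = FF g 1" unfolding rho_def using FF_one[OF g] by simp
      also have "\<dots> \<le> FF g Y" using FF_mono[OF g(1) True] .
      finally show ?thesis using \<alpha>Y \<beta>nn[OF jn] by simp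
    next
      case False
      with cs have s1: "(\<Sum>b\<in>likers E N (ord ! j). X (ord ! j) b) = 1"
        and lev: "\<forall>b\<in>likers E N (ord ! j). 0 < X (ord ! j) b \<longrightarrow> D j b + X (ord ! j) b \<le> max g Y"
        by auto
      define w where "w = max g Y"
      have "(\<Sum>b\<in>N. X (ord ! j) b * (1 - fp g w)) \<le> \<beta> j" unfolding \<beta>_def
      proof (rule sum_mono)
        fix b assume bN: "b \<in> N"
        show "X (ord ! j) b * (1 - fp g w) \<le> X (ord ! j) b - (FF g (D (Suc j) b) - FF g (D j b))"
        proof (cases "0 < X (ord ! j) b")
          case True
          hence bL: "b \<in> likers E N (ord ! j)" using sp(2) by force
          have "FF g (D j b + X (ord ! j) b) - FF g (D j b) \<le> fp g w * (D j b + X (ord ! j) b - D j b)"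
            using FF_step[OF g(1), of "D j b" "D j b + X (ord ! j) b" w] lev bL True unfolding w_def by simp
          thus ?thesis using Dsuc[of j b] by (simp add: algebra_simps)
        next
          case False
          hence "X (ord ! j) b = 0" using Xnn[of "ord ! j" b] by simp
          thus ?thesis using Dsuc[of j b] by simp
        qed
      qed
      moreover have "(\<Sum>b\<in>N. X (ord ! j) b * (1 - fp g w)) = (1 - fp g w) * (\<Sum>b\<in>N. X (ord ! j) b)"
        by (simp add: sum_distrib_left mult.commute)
      moreover have "(\<Sum>b\<in>N. X (ord ! j) b) = (\<Sum>b\<in>likers E N (ord ! j). X (ord ! j) b)"
        by (rule sum.mono_neutral_right[OF finN]) (auto simp: likers_def sp(2))
      ultimately have "1 - fp g w \<le> \<beta> j" using s1 by simp
      moreover have "rho \<le> FF g Y + (1 - fp g w)" unfolding rho_def w_def using key_bound[OF g Y0] .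
      ultimately show ?thesis using \<alpha>Y by simp
    qed
  qed
  have Xs: "\<forall>it a. 0 \<le> Xs it a" "\<forall>it a. (it, a) \<notin> E \<longrightarrow> Xs it a = 0"
    "\<forall>it\<in>M. (\<Sum>a\<in>N. Xs it a) \<le> 1" "\<forall>a\<in>N. (\<Sum>it\<in>M. Xs it a) \<le> 1"
    using assms(9) unfolding frac_matching_def by auto
  have "rho * usw M N Xs = (\<Sum>j<n. \<Sum>a\<in>N. rho * Xs (ord ! j) a)"
    unfolding usw_def by (simp add: reidx sum_distrib_left)
  also have "\<dots> \<le> (\<Sum>j<n. \<Sum>a\<in>N. Xs (ord ! j) a * (\<alpha> a + \<beta> j))"
  proof (intro sum_mono)
    fix j a assume jn: "j \<in> {..<n}" and aN: "a \<in> N"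
    show "rho * Xs (ord ! j) a \<le> Xs (ord ! j) a * (\<alpha> a + \<beta> j)"
    proof (cases "(ord ! j, a) \<in> E")
      case True
      hence "rho \<le> \<alpha> a + \<beta> j" using edge[of j a] jn by simp
      thus ?thesis using Xs(1) mult_right_mono[of rho "\<alpha> a + \<beta> j" "Xs (ord ! j) a"] by (simp add: mult.commute)
    next
      case False thus ?thesis using Xs(2) by simp
    qed
  qed
  also have "\<dots> = (\<Sum>a\<in>N. \<alpha> a * (\<Sum>j<n. Xs (ord ! j) a)) + (\<Sum>j<n. \<beta> j * (\<Sum>a\<in>N. Xs (ord ! j) a))"
  proof -
    have "(\<Sum>j<n. \<Sum>a\<in>N. Xs (ord ! j) a * (\<alpha> a + \<beta> j)) =
      (\<Sum>j<n. \<Sum>a\<in>N. \<alpha> a * Xs (ord ! j) a) + (\<Sum>j<n. \<Sum>a\<in>N. \<beta> j * Xs (ord ! j) a)"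
      by (simp add: algebra_simps sum.distrib)
    also have "(\<Sum>j<n. \<Sum>a\<in>N. \<alpha> a * Xs (ord ! j) a) = (\<Sum>a\<in>N. \<Sum>j<n. \<alpha> a * Xs (ord ! j) a)"
      by (rule sum.swap)
    finally show ?thesis by (simp add: sum_distrib_left)
  qed
  also have "\<dots> \<le> (\<Sum>a\<in>N. \<alpha> a) + (\<Sum>j<n. \<beta> j)"
  proof (rule add_mono)
    show "(\<Sum>a\<in>N. \<alpha> a * (\<Sum>j<n. Xs (ord ! j) a)) \<le> (\<Sum>a\<in>N. \<alpha> a)"
    proof (rule sum_mono)
      fix a assume aN: "a \<in> N"
      have "(\<Sum>j<n. Xs (ord ! j) a) \<le> 1" using Xs(4) aN reidx[of "\<lambda>it. Xs it a"] by metis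
      thus "\<alpha> a * (\<Sum>j<n. Xs (ord ! j) a) \<le> \<alpha> a" using \<alpha>nn[of a] by (simp add: mult_left_le)
    qed
    show "(\<Sum>j<n. \<beta> j * (\<Sum>a\<in>N. Xs (ord ! j) a)) \<le> (\<Sum>j<n. \<beta> j)"
    proof (rule sum_mono)
      fix j assume "j \<in> {..<n}"
      hence jn: "j < n" by simp
      have "(\<Sum>a\<in>N. Xs (ord ! j) a) \<le> 1" using Xs(3) ordM[OF jn] by simp
      thus "\<beta> j * (\<Sum>a\<in>N. Xs (ord ! j) a) \<le> \<beta> j" using \<beta>nn[OF jn] by (simp add: mult_left_le)
    qed
  qed
  also have "\<dots> = usw M N X" by (rule dual_eq)
  finally show ?thesis unfolding rho_def thF_def by simp
qed

end
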